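(* For all integers $n\ge 1$, $c\ge 0$ and $k$, $$\left\langle {n \atop k}\right\rangle_{\!c}=\left\langle {n \atop c(n-1)-k}\right\rangle_{\!c}.$$
   Context: A $c$-rook placement on an $n\times n$ board is a placement of $cn$ rooks on the cells, several rooks being allowed in the same cell, such that every row and every column contains exactly $c$ rooks (equivalently, an $n\times n$ matrix of nonnegative integers with all row and column sums equal to $c$). A drop is a rook lying strictly below the main diagonal, i.e.\ in a cell $(i,j)$ (row $i$, column $j$) with $i>j$, counted with multiplicity. The generalized Eulerian number $\left\langle {n \atop k}\right\rangle_{\!c}$ is the number of $c$-rook placements on the $n\times n$ board with exactly $k$ drops (this is $0$ if $k<0$). *)

theory Defs
  imports Main
begin

text \<open>A c-rook placement on the n x n board: a matrix of nonnegative integers,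
  represented as a function on nat x nat that vanishes outside {0..<n} x {0..<n},
  with every row and column sum equal to c.\<close>
definition rook_placements :: "nat \<Rightarrow> nat \<Rightarrow> (nat \<Rightarrow> nat \<Rightarrow> nat) set" where
  "rook_placements n c = {A. (\<forall>i j. (i \<ge> n \<or> j \<ge> n) \<longrightarrow> A i j = 0)
      \<and> (\<forall>i<n. (\<Sum>j<n. A i j) = c) \<and> (\<forall>j<n. (\<Sum>i<n. A i j) = c)}"

definition drops :: "nat \<Rightarrow> (nat \<Rightarrow> nat \<Rightarrow> nat) \<Rightarrow> nat" where
  "drops n A = (\<Sum>i<n. \<Sum>j<i. A i j)"

definition gen_eulerian :: "nat \<Rightarrow> int \<Rightarrow> nat \<Rightarrow> nat" where
  "gen_eulerian n k c = (if k < 0 then 0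
     else card {A \<in> rook_placements n c. int (drops n A) = k})"

end

theory Submission
  imports Defs
begin

definition PS :: "nat \<Rightarrow> (nat \<Rightarrow> nat \<Rightarrow> nat) \<Rightarrow> nat" where
  "PS n g = (\<Sum>(a,b)\<in>{..<n}\<times>{..<n}. g a b)"

definition rot :: "nat \<Rightarrow> (nat \<Rightarrow> nat \<Rightarrow> nat) \<Rightarrow> nat \<Rightarrow> nat \<Rightarrow> nat" where
  "rot n A i j = (if i < n \<and> j < n then A (n-1-i) (n-1-j) else 0)"

definition sh :: "nat \<Rightarrow> (nat \<Rightarrow> nat \<Rightarrow> nat) \<Rightarrow> nat \<Rightarrow> nat \<Rightarrow> nat" where
  "sh n A i j = (if i < n \<and> j < n then A i (if j = n-1 then 0 else j+1) else 0)"

definition ff where "ff n A = sh n (rot n A)"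

lemma PS_rows: "PS n g = (\<Sum>a<n. \<Sum>b<n. g a b)"
  unfolding PS_def by (simp add: sum.cartesian_product)

lemma drops_alt: "drops n A = PS n (\<lambda>a b. if b < a then A a b else 0)"
  unfolding PS_rows drops_def
proof (rule sum.cong[OF refl])
  fix a assume "a \<in> {..<n}"
  hence "{j \<in> {..<n}. j < a} = {..<a}" by auto
  thus "(\<Sum>j<a. A a j) = (\<Sum>b<n. if b < a then A a b else 0)"
    using sum.inter_filter[of "{..<n}" "A a" "\<lambda>j. j < a"] by simp
qed

lemma PS_add: "PS n (\<lambda>a b. f a b + g a b) = PS n f + PS n g"
  unfolding PS_def by (simp add: case_prod_unfold sum.distrib)

lemma PS_cong: "(\<And>a b. a < n \<Longrightarrow> b < n \<Longrightarrow> f a b = g a b) \<Longrightarrow> PS n f = PS n g"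
  unfolding PS_def by (rule sum.cong) auto

lemma PS_rot: "PS n (\<lambda>a b. g a b) = PS n (\<lambda>a b. g (n-1-a) (n-1-b))"
  unfolding PS_def
  by (rule sum.reindex_bij_witness[where i="\<lambda>(a,b). (n-1-a,n-1-b)" and j="\<lambda>(a,b). (n-1-a,n-1-b)"]) auto

lemma PS_sh:
  assumes "n \<ge> 1"
  shows "PS n (\<lambda>a b. g a b) = PS n (\<lambda>a b. g a (if b = n-1 then 0 else b+1))"
  unfolding PS_def
  apply (rule sum.reindex_bij_witness[where j="\<lambda>(a,b). (a, if b = 0 then n-1 else b - 1)"
        and i="\<lambda>(a,b). (a, if b = n-1 then 0 else b+1)"])
  using assms by auto

lemma total: assumes "A \<in> rook_placements n c" shows "PS n A = c * n"
  using assms unfolding PS_rows rook_placements_def by simp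

lemma col0: assumes "A \<in> rook_placements n c" "n \<ge> 1"
  shows "PS n (\<lambda>a b. if b = 0 then A a b else 0) = c"
proof -
  have "PS n (\<lambda>a b. if b = 0 then A a b else 0) = (\<Sum>a<n. A a 0)"
    unfolding PS_rows using assms(2) by (simp add: sum.delta)
  also have "\<dots> = c" using assms unfolding rook_placements_def by auto
  finally show ?thesis .
qed

lemma bij_sum:
  assumes "\<And>j. j < n \<Longrightarrow> s j < n" "\<And>j. j < n \<Longrightarrow> t j < n"
    "\<And>j. j < n \<Longrightarrow> s (t j) = j" "\<And>j. j < n \<Longrightarrow> t (s j) = j"
  shows "(\<Sum>j<n. h (s j)) = (\<Sum>j<n. (h j::nat))"
  by (rule sum.reindex_bij_witness[where i=t and j=s]) (use assms in auto)

lemma rot_pl: assumes "A \<in> rook_placements n c" shows "rot n A \<in> rook_placements n c"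
proof -
  have r: "\<forall>i<n. (\<Sum>j<n. A i j) = c" and co: "\<forall>j<n. (\<Sum>i<n. A i j) = c"
    using assms unfolding rook_placements_def by auto
  have "(\<Sum>j<n. rot n A i j) = c" if "i < n" for i
  proof -
    have "(\<Sum>j<n. rot n A i j) = (\<Sum>j<n. A (n-1-i) (n-1-j))"
      by (rule sum.cong) (use that in \<open>auto simp: rot_def\<close>)
    also have "\<dots> = (\<Sum>j<n. A (n-1-i) j)"
      by (rule bij_sum[where t="\<lambda>j. n-1-j"]) auto
    finally show ?thesis using r that by simp
  qed
  moreover have "(\<Sum>i<n. rot n A i j) = c" if "j < n" for j
  proof -
    have "(\<Sum>i<n. rot n A i j) = (\<Sum>i<n. A (n-1-i) (n-1-j))"
      by (rule sum.cong) (use that in \<open>auto simp: rot_def\<close>)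
    also have "\<dots> = (\<Sum>i<n. A i (n-1-j))"
      by (rule bij_sum[where h="\<lambda>i. A i (n-1-j)" and t="\<lambda>j. n-1-j"]) auto
    finally show ?thesis using co that by simp
  qed
  ultimately show ?thesis unfolding rook_placements_def by (auto simp: rot_def)
qed

lemma sh_pl: assumes "A \<in> rook_placements n c" "n \<ge> 1" shows "sh n A \<in> rook_placements n c"
proof -
  have r: "\<forall>i<n. (\<Sum>j<n. A i j) = c" and co: "\<forall>j<n. (\<Sum>i<n. A i j) = c"
    using assms unfolding rook_placements_def by auto
  have "(\<Sum>j<n. sh n A i j) = c" if "i < n" for i
  proof -
    have "(\<Sum>j<n. sh n A i j) = (\<Sum>j<n. A i (if j = n-1 then 0 else j+1))"
      by (rule sum.cong) (use that in \<open>auto simp: sh_def\<close>)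
    also have "\<dots> = (\<Sum>j<n. A i j)"
      by (rule bij_sum[where t="\<lambda>j. if j = 0 then n-1 else j - 1"]) (use assms(2) in auto)
    finally show ?thesis using r that by simp
  qed
  moreover have "(\<Sum>i<n. sh n A i j) = c" if "j < n" for j
  proof -
    have "(\<Sum>i<n. sh n A i j) = (\<Sum>i<n. A i (if j = n-1 then 0 else j+1))"
      by (rule sum.cong) (use that in \<open>auto simp: sh_def\<close>)
    thus ?thesis using co that assms(2) by auto
  qed
  ultimately show ?thesis unfolding rook_placements_def by (auto simp: sh_def)
qed

lemma ff_pl: "A \<in> rook_placements n c \<Longrightarrow> n \<ge> 1 \<Longrightarrow> ff n A \<in> rook_placements n c"
  unfolding ff_def by (intro sh_pl rot_pl)

lemma ff_inv: assumes "A \<in> rook_placements n c" "n \<ge> 1" shows "ff n (ff n A) = A"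
proof (intro ext)
  fix i j
  show "ff n (ff n A) i j = A i j"
  proof (cases "i < n \<and> j < n")
    case True
    have "Suc j < n \<Longrightarrow> n - Suc (Suc (n - Suc (Suc j))) = j" by arith
    thus ?thesis using True assms(2) by (auto simp: ff_def sh_def rot_def)
  next
    case False thus ?thesis using assms(1) unfolding rook_placements_def
      by (auto simp: ff_def sh_def rot_def)
  qed
qed

lemma split3: "PS n A = PS n (\<lambda>a b. if b < a then A a b else 0) + PS n (\<lambda>a b. if a = b then A a b else 0)
   + PS n (\<lambda>a b. if a < b then A a b else 0)"
  by (subst PS_add[symmetric])+ (rule PS_cong, auto)

lemma ff_drops: assumes "A \<in> rook_placements n c" "n \<ge> 1"
  shows "drops n (ff n A) + drops n A = c * (n - 1)"
proof -
  let ?B = "rot n A"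
  have B: "?B \<in> rook_placements n c" using rot_pl assms by blast
  have sh1: "drops n (sh n ?B) = PS n (\<lambda>a b. if 0 < b \<and> b \<le> a then ?B a b else 0)"
    unfolding drops_alt
    by (subst PS_sh[OF assms(2)]) (rule PS_cong, use assms(2) in \<open>auto simp: sh_def\<close>)
  have sh2: "PS n (\<lambda>a b. if 0 < b \<and> b \<le> a then ?B a b else 0) + PS n (\<lambda>a b. if b = 0 then ?B a b else 0)
    = PS n (\<lambda>a b. if b < a then ?B a b else 0) + PS n (\<lambda>a b. if a = b then ?B a b else 0)"
    by (subst PS_add[symmetric])+ (rule PS_cong, auto)
  have r1: "PS n (\<lambda>a b. if b < a then ?B a b else 0) = PS n (\<lambda>a b. if a < b then A a b else 0)"
    by (subst PS_rot) (rule PS_cong, auto simp: rot_def)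
  have r2: "PS n (\<lambda>a b. if a = b then ?B a b else 0) = PS n (\<lambda>a b. if a = b then A a b else 0)"
    by (subst PS_rot) (rule PS_cong, auto simp: rot_def)
  have "drops n (ff n A) + c + drops n A = c * n"
    using sh1 sh2 r1 r2 col0[OF B assms(2)] split3[of n A] total[OF assms(1)]
    unfolding ff_def drops_alt by linarith
  thus ?thesis using assms(2) by (simp add: algebra_simps)
qed

definition S where "S n c k = {A \<in> rook_placements n c. int (drops n A) = k}"

lemma S_card: assumes "n \<ge> 1"
  shows "card (S n c k) = card (S n c (int c * (int n - 1) - k))"
proof -
  have e: "int (drops n (ff n A)) = int c * (int n - 1) - int (drops n A)"
    if "A \<in> rook_placements n c" for A
  proof -
    have "int (drops n (ff n A)) + int (drops n A) = int (c * (n - 1))"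
      using ff_drops[OF that assms] by linarith
    thus ?thesis using assms by (simp add: of_nat_diff)
  qed
  have "bij_betw (ff n) (S n c k) (S n c (int c * (int n - 1) - k))"
    apply (rule bij_betw_byWitness[where f'="ff n"])
    using ff_inv[OF _ assms] ff_pl[OF _ assms] e unfolding S_def by auto
  thus ?thesis by (rule bij_betw_same_card)
qed

theorem theorem4p1:
  fixes n c :: nat and k :: int
  assumes "n \<ge> 1"
  shows "gen_eulerian n k c = gen_eulerian n (int c * (int n - 1) - k) c"
proof -
  have g: "gen_eulerian n k' c = card (S n c k')" for k'
    unfolding gen_eulerian_def S_def by auto
  show ?thesis unfolding g using S_card[OF assms] by simp
qed

end
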